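(* Let $N\ge 1$ and $M$ be integers and let $\mathcal{G}_{N,M}=\{G_1,\dots,G_{S_{N,M}}\}$ be the set of simple undirected networks (no self-edges, no repeated edges) on the fixed node set $\{1,\dots,N\}$ with exactly $M$ edges, so $S_{N,M}=\binom{N(N-1)/2}{M}$. Consider the Markov chain on $\mathcal{G}_{N,M}$ given by uniform rewiring, with transition matrix $P_{rs}$ equal to the probability that one uniform rewire turns $G_r$ into $G_s$, and let $\pi^{(t)}$ evolve by $\pi^{(t+1)}_s=\sum_r \pi^{(t)}_r P_{rs}$ from an initial distribution $\pi^{(0)}$ concentrated on an initial network $G^{(0)}\in\mathcal{G}_{N,M}$. Then this Markov chain is ergodic and has the uniform stationary distribution: $\lim_{t\to\infty}\pi^{(t)}_s=S_{N,M}^{-1}$ for every $s$.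
   Context: Uniform rewiring is the stochastic map on $\mathcal{G}_{N,M}$ taking a network with edge set $\mathcal{E}$ to the network with edge set $(\mathcal{E}\setminus\{(i,j)\})\cup\{(i',j')\}$, where $(i,j)$ is chosen uniformly at random from $\mathcal{E}$, and then $(i',j')$ is chosen uniformly at random among the $N(N-1)/2-M+1$ node pairs $\{i',j'\}$, $i'\neq j'$, that are not edges of $\mathcal{E}\setminus\{(i,j)\}$ (so re-selecting $(i,j)$ is allowed). *)

theory Defs
  imports Complex_Main
begin

definition node_pairs :: "nat \<Rightarrow> nat set set" where
  "node_pairs N = {e. e \<subseteq> {1..N} \<and> card e = 2}"

definition networks :: "nat \<Rightarrow> nat \<Rightarrow> nat set set set" where
  "networks N M = {E. E \<subseteq> node_pairs N \<and> card E = M}"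

text \<open>Transition probability of uniform rewiring: pick an edge e of E uniformly,
  then pick f uniformly among node pairs not in E - {e}; the new network is (E - {e}) \<union> {f}.\<close>
definition rewire_prob :: "nat \<Rightarrow> nat set set \<Rightarrow> nat set set \<Rightarrow> real" where
  "rewire_prob N E E' =
     (\<Sum>e\<in>E. (1 / real (card E)) *
        (\<Sum>f\<in>node_pairs N - (E - {e}).
            (1 / real (card (node_pairs N - (E - {e})))) *
            (if (E - {e}) \<union> {f} = E' then 1 else 0)))"

fun rewire_steps :: "nat \<Rightarrow> nat \<Rightarrow> nat \<Rightarrow> nat set set \<Rightarrow> nat set set \<Rightarrow> real" where
  "rewire_steps N M 0 r s = (if r = s then 1 else 0)"
| "rewire_steps N M (Suc t) r s =
     (\<Sum>q\<in>networks N M. rewire_steps N M t r q * rewire_prob N q s)"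

fun rewire_dist :: "nat \<Rightarrow> nat \<Rightarrow> nat set set \<Rightarrow> nat \<Rightarrow> nat set set \<Rightarrow> real" where
  "rewire_dist N M G0 0 s = (if s = G0 then 1 else 0)"
| "rewire_dist N M G0 (Suc t) s =
     (\<Sum>r\<in>networks N M. rewire_dist N M G0 t r * rewire_prob N r s)"

definition rewire_irreducible :: "nat \<Rightarrow> nat \<Rightarrow> bool" where
  "rewire_irreducible N M \<longleftrightarrow>
     (\<forall>r\<in>networks N M. \<forall>s\<in>networks N M. \<exists>t. rewire_steps N M t r s > 0)"

definition rewire_aperiodic :: "nat \<Rightarrow> nat \<Rightarrow> bool" where
  "rewire_aperiodic N M \<longleftrightarrow>
     (\<forall>r\<in>networks N M. Gcd {t. t > 0 \<and> rewire_steps N M t r r > 0} = 1)"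

definition rewire_ergodic :: "nat \<Rightarrow> nat \<Rightarrow> bool" where
  "rewire_ergodic N M \<longleftrightarrow> rewire_irreducible N M \<and> rewire_aperiodic N M"

end

theory Submission
  imports Defs
begin

fun itr :: "'a set \<Rightarrow> ('a \<Rightarrow> 'a \<Rightarrow> real) \<Rightarrow> ('a \<Rightarrow> real) \<Rightarrow> nat \<Rightarrow> 'a \<Rightarrow> real" where
  "itr X P d 0 = d"
| "itr X P d (Suc t) = (\<lambda>s. \<Sum>r\<in>X. itr X P d t r * P r s)"

definition pm :: "'a \<Rightarrow> 'a \<Rightarrow> real" where
  "pm r = (\<lambda>s. if s = r then 1 else 0)"

lemma itr_add: "itr X P d (a + b) = itr X P (itr X P d a) b"
  by (induction b) auto

lemma itr_diff: "itr X P (\<lambda>x. \<mu> x - \<nu> x) t s = itr X P \<mu> t s - itr X P \<nu> t s"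
  by (induction t arbitrary: s) (auto simp: left_diff_distrib sum_subtractf)

lemma itr_lin:
  assumes "finite X" "s \<in> X"
  shows "itr X P d n s = (\<Sum>r\<in>X. d r * itr X P (pm r) n s)"
  using assms(2)
proof (induction n arbitrary: s)
  case 0
  have "(\<Sum>r\<in>X. d r * pm r s) = (\<Sum>r\<in>X. if s = r then d s else 0)"
    by (intro sum.cong) (auto simp: pm_def)
  then show ?case using assms(1) 0 by simp
next
  case (Suc n)
  have "itr X P d (Suc n) s = (\<Sum>q\<in>X. (\<Sum>r\<in>X. d r * itr X P (pm r) n q) * P q s)"
    using Suc.IH by simp
  also have "\<dots> = (\<Sum>q\<in>X. \<Sum>r\<in>X. d r * itr X P (pm r) n q * P q s)"
    by (simp add: sum_distrib_right)
  also have "\<dots> = (\<Sum>r\<in>X. \<Sum>q\<in>X. d r * itr X P (pm r) n q * P q s)"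
    by (rule sum.swap)
  also have "\<dots> = (\<Sum>r\<in>X. d r * itr X P (pm r) (Suc n) s)"
    by (simp add: sum_distrib_left mult.assoc)
  finally show ?case .
qed

locale stoch =
  fixes X :: "'a set" and P :: "'a \<Rightarrow> 'a \<Rightarrow> real"
  assumes fin: "finite X" and ne: "X \<noteq> {}"
    and nn: "\<And>r s. r \<in> X \<Longrightarrow> s \<in> X \<Longrightarrow> 0 \<le> P r s"
    and row: "\<And>r. r \<in> X \<Longrightarrow> (\<Sum>s\<in>X. P r s) = 1"
    and col: "\<And>s. s \<in> X \<Longrightarrow> (\<Sum>r\<in>X. P r s) = 1"
begin

lemma itr_sum: "(\<Sum>s\<in>X. itr X P d t s) = (\<Sum>s\<in>X. d s)"
proof (induction t)
  case 0 then show ?case by simp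
next
  case (Suc t)
  have "(\<Sum>s\<in>X. itr X P d (Suc t) s) = (\<Sum>s\<in>X. \<Sum>r\<in>X. itr X P d t r * P r s)" by simp
  also have "\<dots> = (\<Sum>r\<in>X. \<Sum>s\<in>X. itr X P d t r * P r s)" by (rule sum.swap)
  also have "\<dots> = (\<Sum>r\<in>X. itr X P d t r)"
    by (simp add: sum_distrib_left[symmetric] row)
  finally show ?case using Suc by simp
qed

lemma itr_nonneg: "(\<And>s. s \<in> X \<Longrightarrow> 0 \<le> d s) \<Longrightarrow> s \<in> X \<Longrightarrow> 0 \<le> itr X P d t s"
  by (induction t arbitrary: s) (auto intro!: sum_nonneg mult_nonneg_nonneg nn)

lemma itr_unif: "s \<in> X \<Longrightarrow> itr X P (\<lambda>_. c) t s = c"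
proof (induction t arbitrary: s)
  case 0 then show ?case by simp
next
  case (Suc t)
  have "itr X P (\<lambda>_. c) (Suc t) s = (\<Sum>r\<in>X. c * P r s)"
    using Suc.IH by simp
  also have "\<dots> = c" using col[OF Suc.prems] by (simp add: sum_distrib_left[symmetric])
  finally show ?case .
qed

lemma nonexp0: "(\<Sum>s\<in>X. \<bar>\<Sum>r\<in>X. e r * P r s\<bar>) \<le> (\<Sum>r\<in>X. \<bar>e r\<bar>)"
proof -
  have "(\<Sum>s\<in>X. \<bar>\<Sum>r\<in>X. e r * P r s\<bar>) \<le> (\<Sum>s\<in>X. \<Sum>r\<in>X. \<bar>e r\<bar> * P r s)"
  proof (rule sum_mono)
    fix s assume s: "s \<in> X"
    have "\<bar>\<Sum>r\<in>X. e r * P r s\<bar> \<le> (\<Sum>r\<in>X. \<bar>e r * P r s\<bar>)" by (rule sum_abs)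
    also have "\<dots> = (\<Sum>r\<in>X. \<bar>e r\<bar> * P r s)"
      using s by (intro sum.cong) (auto simp: abs_mult nn)
    finally show "\<bar>\<Sum>r\<in>X. e r * P r s\<bar> \<le> (\<Sum>r\<in>X. \<bar>e r\<bar> * P r s)" .
  qed
  also have "\<dots> = (\<Sum>r\<in>X. \<Sum>s\<in>X. \<bar>e r\<bar> * P r s)" by (rule sum.swap)
  also have "\<dots> = (\<Sum>r\<in>X. \<bar>e r\<bar>)" by (simp add: sum_distrib_left[symmetric] row)
  finally show ?thesis .
qed

abbreviation Q where "Q n r s \<equiv> itr X P (pm r) n s"

lemma Q_rows: "r \<in> X \<Longrightarrow> (\<Sum>s\<in>X. Q n r s) = 1"
  using fin by (simp add: itr_sum pm_def)

lemma contract: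
  assumes low: "\<forall>r\<in>X. \<forall>s\<in>X. d0 \<le> Q n r s" and z: "(\<Sum>r\<in>X. e r) = 0"
  shows "(\<Sum>s\<in>X. \<bar>itr X P e n s\<bar>) \<le> (1 - real (card X) * d0) * (\<Sum>r\<in>X. \<bar>e r\<bar>)"
proof -
  have "(\<Sum>s\<in>X. \<bar>itr X P e n s\<bar>) \<le> (\<Sum>s\<in>X. \<Sum>r\<in>X. \<bar>e r\<bar> * (Q n r s - d0))"
  proof (rule sum_mono)
    fix s assume s: "s \<in> X"
    have "itr X P e n s = (\<Sum>r\<in>X. e r * Q n r s)"
      by (rule itr_lin[OF fin s])
    also have "\<dots> = (\<Sum>r\<in>X. e r * Q n r s) - (\<Sum>r\<in>X. e r) * d0"
      using z by simp
    also have "\<dots> = (\<Sum>r\<in>X. e r * (Q n r s - d0))"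
      by (simp add: sum_distrib_right right_diff_distrib sum_subtractf)
    finally have "\<bar>itr X P e n s\<bar> \<le> (\<Sum>r\<in>X. \<bar>e r * (Q n r s - d0)\<bar>)"
      by (simp only: sum_abs)
    also have "\<dots> = (\<Sum>r\<in>X. \<bar>e r\<bar> * (Q n r s - d0))"
      using s low by (intro sum.cong) (auto simp: abs_mult)
    finally show "\<bar>itr X P e n s\<bar> \<le> (\<Sum>r\<in>X. \<bar>e r\<bar> * (Q n r s - d0))" .
  qed
  also have "\<dots> = (\<Sum>r\<in>X. \<Sum>s\<in>X. \<bar>e r\<bar> * (Q n r s - d0))" by (rule sum.swap)
  also have "\<dots> = (\<Sum>r\<in>X. \<bar>e r\<bar> * (1 - real (card X) * d0))"
  proof (rule sum.cong)
    fix r assume r: "r \<in> X"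
    have "(\<Sum>s\<in>X. \<bar>e r\<bar> * (Q n r s - d0)) = \<bar>e r\<bar> * ((\<Sum>s\<in>X. Q n r s) - real (card X) * d0)"
      by (simp add: sum_distrib_left[symmetric] sum_subtractf)
    then show "(\<Sum>s\<in>X. \<bar>e r\<bar> * (Q n r s - d0)) = \<bar>e r\<bar> * (1 - real (card X) * d0)"
      using Q_rows[OF r] by simp
  qed simp
  also have "\<dots> = (1 - real (card X) * d0) * (\<Sum>r\<in>X. \<bar>e r\<bar>)"
    by (simp add: sum_distrib_right mult.commute)
  finally show ?thesis .
qed

lemma div_lim: "n > 0 \<Longrightarrow> filterlim (\<lambda>t::nat. t div n) sequentially sequentially"
  unfolding filterlim_at_top eventually_sequentially
proof (intro allI exI[of _ "Z * n" for Z] impI allI)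
  fix Z t assume "0 < n" "Z * n \<le> t"
  then show "Z \<le> t div n" by (metis div_le_mono div_mult_self_is_m)
qed

lemma converge:
  assumes n: "n > 0" and d0: "d0 > 0" and low: "\<forall>r\<in>X. \<forall>s\<in>X. d0 \<le> Q n r s"
   and mu: "(\<Sum>s\<in>X. \<mu> s) = 1" and s: "s \<in> X"
  shows "(\<lambda>t. itr X P \<mu> t s) \<longlonglongrightarrow> 1 / real (card X)"
proof -
  define S where "S = real (card X)"
  have S: "S > 0" using fin ne by (simp add: S_def card_gt_0_iff)
  define e where "e = (\<lambda>x. \<mu> x - 1/S)"
  have ez: "(\<Sum>r\<in>X. e r) = 0" using mu S by (simp add: e_def sum_subtractf S_def)
  define D where "D t = (\<Sum>s\<in>X. \<bar>itr X P e t s\<bar>)" for t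
  have Dsuc: "D (Suc t) \<le> D t" for t unfolding D_def using nonexp0[of "itr X P e t"] by simp
  have Dmono: "D (a + b) \<le> D a" for a b
    by (induction b) (auto intro: order_trans[OF Dsuc])
  define c where "c = 1 - S * d0"
  have c1: "c < 1" using S d0 by (simp add: c_def)
  have c0: "0 \<le> c"
  proof -
    obtain r where r: "r \<in> X" using ne by auto
    have "(\<Sum>s\<in>X. d0) \<le> (\<Sum>s\<in>X. Q n r s)" using low r by (intro sum_mono) auto
    then show ?thesis using Q_rows[OF r] by (simp add: c_def S_def)
  qed
  have Dk: "D (k * n) \<le> c ^ k * D 0" for k
  proof (induction k)
    case 0 then show ?case by simp
  next
    case (Suc k)
    have "D (Suc k * n) = (\<Sum>s\<in>X. \<bar>itr X P (itr X P e (k*n)) n s\<bar>)"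
      unfolding D_def by (simp add: itr_add[symmetric] add.commute)
    also have "\<dots> \<le> c * D (k*n)" unfolding D_def c_def S_def
      using contract[OF low, of "itr X P e (k*n)"] itr_sum[of e "k*n"] ez by simp
    also have "\<dots> \<le> c * (c^k * D 0)" using Suc c0 by (rule mult_left_mono)
    finally show ?case by simp
  qed
  have bound: "\<bar>itr X P \<mu> t s - 1/S\<bar> \<le> c ^ (t div n) * D 0" for t
  proof -
    have "itr X P \<mu> t s - 1/S = itr X P e t s"
      using itr_diff[of X P \<mu> "\<lambda>_. 1/S" t s] itr_unif[OF s] by (simp add: e_def)
    also have "\<bar>\<dots>\<bar> \<le> D t" unfolding D_def
      by (rule member_le_sum[OF s]) (auto simp: fin)
    also have "D t \<le> D ((t div n) * n)"
      using Dmono[of "(t div n) * n" "t mod n"] by simp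
    also have "\<dots> \<le> c ^ (t div n) * D 0" by (rule Dk)
    finally show ?thesis .
  qed
  have "(\<lambda>k. c ^ k) \<longlonglongrightarrow> 0" using c0 c1 by (intro LIMSEQ_power_zero) simp
  then have "(\<lambda>t. c ^ (t div n)) \<longlonglongrightarrow> 0" by (rule filterlim_compose[OF _ div_lim[OF n]])
  then have lim0: "(\<lambda>t. c ^ (t div n) * D 0) \<longlonglongrightarrow> 0"
    using tendsto_mult_left_zero by blast
  have l1: "(\<lambda>t. 1/S - c ^ (t div n) * D 0) \<longlonglongrightarrow> 1/S"
    using tendsto_diff[OF tendsto_const lim0] by simp
  have l2: "(\<lambda>t. 1/S + c ^ (t div n) * D 0) \<longlonglongrightarrow> 1/S"
    using tendsto_add[OF tendsto_const lim0] by simp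
  have b1: "1/S - c ^ (t div n) * D 0 \<le> itr X P \<mu> t s" for t
    using bound[of t] by (simp add: abs_le_iff)
  have b2: "itr X P \<mu> t s \<le> 1/S + c ^ (t div n) * D 0" for t
    using bound[of t] by (simp add: abs_le_iff)
  have e1: "\<forall>\<^sub>F t in sequentially. 1/S - c ^ (t div n) * D 0 \<le> itr X P \<mu> t s"
    by (intro always_eventually allI b1)
  have e2: "\<forall>\<^sub>F t in sequentially. itr X P \<mu> t s \<le> 1/S + c ^ (t div n) * D 0"
    by (intro always_eventually allI b2)
  have "(\<lambda>t. itr X P \<mu> t s) \<longlonglongrightarrow> 1/S"
    by (rule tendsto_sandwich[OF e1 e2 l1 l2])
  then show ?thesis by (simp add: S_def)
qed

end

lemma fin_K: "finite (node_pairs N)"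
proof -
  have "node_pairs N \<subseteq> Pow {1..N}" by (auto simp: node_pairs_def)
  then show ?thesis by (rule finite_subset) simp
qed

lemma fin_X: "finite (networks N M)"
proof -
  have "networks N M \<subseteq> Pow (node_pairs N)" by (auto simp: networks_def)
  then show ?thesis by (rule finite_subset) (simp add: fin_K)
qed

lemma X_sub: "E \<in> networks N M \<Longrightarrow> E \<subseteq> node_pairs N"
  and X_card: "E \<in> networks N M \<Longrightarrow> card E = M"
  by (auto simp: networks_def)

lemma X_fin: "E \<in> networks N M \<Longrightarrow> finite E"
  by (rule finite_subset[OF X_sub fin_K])

lemma step_in:
  assumes E: "E \<in> networks N M" and e: "e \<in> E" and f: "f \<in> node_pairs N - (E - {e})"
  shows "(E - {e}) \<union> {f} \<in> networks N M"
proof -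
  have fE: "finite E" using X_fin[OF E] .
  have M: "card E = M" using X_card[OF E] .
  have cpos: "card E > 0" using fE e by (auto simp: card_gt_0_iff)
  have fn: "f \<notin> E - {e}" using f by blast
  have c1: "card (E - {e}) = card E - 1" using e fE by (simp add: card_Diff_singleton)
  have "(E - {e}) \<union> {f} = insert f (E - {e})" by blast
  then have "card ((E - {e}) \<union> {f}) = Suc (card (E - {e}))"
    using fn fE by (simp add: card_insert_disjoint)
  then have cc: "card ((E - {e}) \<union> {f}) = M" using c1 cpos M by linarith
  have sub: "(E - {e}) \<union> {f} \<subseteq> node_pairs N" using X_sub[OF E] f by blast
  show ?thesis using cc sub by (simp add: networks_def)
qed

lemma cardA:
  assumes E: "E \<in> networks N M" and e: "e \<in> E"
  shows "card (node_pairs N - (E - {e})) = card (node_pairs N) - (M - 1)"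
proof -
  have "card (node_pairs N - (E - {e})) = card (node_pairs N) - card (E - {e})"
    using X_sub[OF E] X_fin[OF E] by (intro card_Diff_subset) auto
  then show ?thesis using X_card[OF E] X_fin[OF E] e by simp
qed

lemma cardA_pos:
  assumes E: "E \<in> networks N M" and e: "e \<in> E"
  shows "card (node_pairs N - (E - {e})) > 0"
  using X_sub[OF E] e fin_K by (auto simp: card_gt_0_iff)

definition SS :: "nat \<Rightarrow> nat set set \<Rightarrow> nat set set \<Rightarrow> (nat set \<times> nat set) set" where
  "SS N E E' = {p \<in> Sigma E (\<lambda>e. node_pairs N - (E - {e})). (E - {fst p}) \<union> {snd p} = E'}"

lemma SS_fin: "E \<in> networks N M \<Longrightarrow> finite (SS N E E')"
proof -
  assume E: "E \<in> networks N M"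
  have "SS N E E' \<subseteq> E \<times> node_pairs N" by (auto simp: SS_def)
  then show ?thesis by (rule finite_subset) (simp add: X_fin[OF E] fin_K)
qed

lemma P_formula:
  assumes E: "E \<in> networks N M"
  shows "rewire_prob N E E' = real (card (SS N E E')) / (real M * real (card (node_pairs N) - (M - 1)))"
proof -
  define L where "L = card (node_pairs N) - (M - 1)"
  define A where "A = (\<lambda>e. node_pairs N - (E - {e}))"
  define ind where "ind = (\<lambda>e f. if (E - {e}) \<union> {f} = E' then 1 else (0::real))"
  have fA: "finite (A e)" for e using fin_K by (simp add: A_def)
  have "rewire_prob N E E' = (\<Sum>e\<in>E. \<Sum>f\<in>A e. (1 / (real M * real L)) * ind e f)"
    unfolding rewire_prob_def A_def ind_def
    by (intro sum.cong refl) (simp add: sum_distrib_left cardA[OF E] X_card[OF E] L_def)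
  also have "\<dots> = (1 / (real M * real L)) * (\<Sum>e\<in>E. \<Sum>f\<in>A e. ind e f)"
    by (simp add: sum_distrib_left)
  also have "(\<Sum>e\<in>E. \<Sum>f\<in>A e. ind e f) = (\<Sum>p\<in>Sigma E A. ind (fst p) (snd p))"
    using X_fin[OF E] fA by (subst sum.Sigma) (auto simp: case_prod_beta)
  also have "\<dots> = (\<Sum>p\<in>SS N E E'. 1)"
    unfolding SS_def A_def ind_def
    using X_fin[OF E] fA by (subst sum.inter_filter) (auto simp: A_def)
  also have "\<dots> = real (card (SS N E E'))" by simp
  finally show ?thesis by (simp add: L_def)
qed

lemma SS_swap:
  assumes E: "E \<in> networks N M" and E': "E' \<in> networks N M"
  shows "card (SS N E E') \<le> card (SS N E' E)"
proof -
  have sub: "prod.swap ` SS N E E' \<subseteq> SS N E' E"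
  proof
    fix q assume "q \<in> prod.swap ` SS N E E'"
    then obtain e f where q: "q = (f, e)" and p: "(e, f) \<in> SS N E E'" by auto
    then have e: "e \<in> E" and f: "f \<in> node_pairs N" "f \<notin> E - {e}" and g: "(E - {e}) \<union> {f} = E'"
      by (auto simp: SS_def)
    have fE': "f \<in> E'" using g by auto
    have rem: "E' - {f} = E - {e}" using g f by auto
    have eK: "e \<in> node_pairs N" using X_sub[OF E] e by auto
    show "q \<in> SS N E' E" unfolding q SS_def using fE' eK rem e by auto
  qed
  have "card (SS N E E') = card (prod.swap ` SS N E E')"
    by (simp add: card_image)
  also have "\<dots> \<le> card (SS N E' E)" by (rule card_mono[OF SS_fin[OF E'] sub])
  finally show ?thesis .
qed

lemma P_sym:
  assumes E: "E \<in> networks N M" and E': "E' \<in> networks N M"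
  shows "rewire_prob N E E' = rewire_prob N E' E"
proof -
  have "card (SS N E E') = card (SS N E' E)"
    using SS_swap[OF E E'] SS_swap[OF E' E] by simp
  then show ?thesis using P_formula[OF E] P_formula[OF E'] by simp
qed

lemma P_nn: "E \<in> networks N M \<Longrightarrow> 0 \<le> rewire_prob N E E'"
  by (simp add: P_formula)

lemma P_pos:
  assumes E: "E \<in> networks N M" and e: "e \<in> E" and f: "f \<in> node_pairs N - (E - {e})"
  shows "0 < rewire_prob N E ((E - {e}) \<union> {f})"
proof -
  have "(e, f) \<in> SS N E ((E - {e}) \<union> {f})" using e f by (auto simp: SS_def)
  then have c: "card (SS N E ((E - {e}) \<union> {f})) > 0"
    using SS_fin[OF E] by (auto simp: card_gt_0_iff)
  have M: "M > 0" using X_card[OF E] X_fin[OF E] e card_gt_0_iff by fastforce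
  have L: "card (node_pairs N) - (M - 1) > 0" using cardA_pos[OF E e] cardA[OF E e] by simp
  show ?thesis using c M L by (simp add: P_formula[OF E])
qed

lemma P_row:
  assumes E: "E \<in> networks N M" and M1: "M \<ge> 1"
  shows "(\<Sum>E'\<in>networks N M. rewire_prob N E E') = 1"
proof -
  define A where "A = (\<lambda>e. node_pairs N - (E - {e}))"
  define c where "c = (\<lambda>e. (1 / real (card E)) * (1 / real (card (A e))))"
  define g where "g = (\<lambda>e f. (E - {e}) \<union> {f})"
  let ?X = "networks N M"
  have "(\<Sum>E'\<in>?X. rewire_prob N E E') =
        (\<Sum>E'\<in>?X. \<Sum>e\<in>E. \<Sum>f\<in>A e. c e * (if g e f = E' then 1 else 0))"
    unfolding rewire_prob_def A_def c_def g_def by (simp add: sum_distrib_left mult.assoc)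
  also have "\<dots> = (\<Sum>e\<in>E. \<Sum>E'\<in>?X. \<Sum>f\<in>A e. c e * (if g e f = E' then 1 else 0))"
    by (rule sum.swap)
  also have "\<dots> = (\<Sum>e\<in>E. \<Sum>f\<in>A e. \<Sum>E'\<in>?X. c e * (if g e f = E' then 1 else 0))"
    by (intro sum.cong refl sum.swap)
  also have "\<dots> = (\<Sum>e\<in>E. \<Sum>f\<in>A e. c e)"
  proof (intro sum.cong refl)
    fix e f assume e: "e \<in> E" and f: "f \<in> A e"
    have "g e f \<in> ?X" using step_in[OF E e] f by (simp add: A_def g_def)
    then show "(\<Sum>E'\<in>?X. c e * (if g e f = E' then 1 else 0)) = c e"
      using fin_X by (simp add: if_distrib cong: if_cong)
  qed
  also have "\<dots> = (\<Sum>e\<in>E. 1 / real (card E))"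
  proof (intro sum.cong refl)
    fix e assume e: "e \<in> E"
    have "card (A e) > 0" using cardA_pos[OF E e] by (simp add: A_def)
    then show "(\<Sum>f\<in>A e. c e) = 1 / real (card E)" by (simp add: c_def)
  qed
  also have "\<dots> = 1"
  proof -
    have "card E > 0" using X_card[OF E] M1 by simp
    then show ?thesis by simp
  qed
  finally show ?thesis .
qed


context stoch begin

lemma Q1: "r \<in> X \<Longrightarrow> Q 1 r s = P r s"
proof -
  assume r: "r \<in> X"
  have "Q 1 r s = (\<Sum>q\<in>X. pm r q * P q s)" by simp
  also have "\<dots> = (\<Sum>q\<in>X. if q = r then P r s else 0)"
    by (intro sum.cong) (auto simp: pm_def)
  also have "\<dots> = P r s" using fin r by simp
  finally show ?thesis .
qed

lemma Q_nonneg: "s \<in> X \<Longrightarrow> 0 \<le> Q t r s"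
  by (rule itr_nonneg) (auto simp: pm_def)

lemma CK:
  assumes r: "r \<in> X" and q: "q \<in> X" and s: "s \<in> X"
  shows "Q a r q * Q b q s \<le> Q (a + b) r s"
proof -
  have "Q (a + b) r s = itr X P (itr X P (pm r) a) b s" by (simp add: itr_add)
  also have "\<dots> = (\<Sum>q'\<in>X. itr X P (pm r) a q' * Q b q' s)" by (rule itr_lin[OF fin s])
  finally have eq: "Q (a + b) r s = (\<Sum>q'\<in>X. Q a r q' * Q b q' s)" .
  have "Q a r q * Q b q s \<le> (\<Sum>q'\<in>X. Q a r q' * Q b q' s)"
    by (rule member_le_sum[OF q]) (auto intro!: mult_nonneg_nonneg Q_nonneg s simp: fin)
  then show ?thesis using eq by simp
qed

lemma Q_self:
  assumes r: "r \<in> X" and p: "P r r > 0"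
  shows "Q t r r > 0"
proof (induction t)
  case 0 then show ?case by (simp add: pm_def)
next
  case (Suc t)
  have "0 < Q t r r * Q 1 r r" using Suc p Q1[OF r] by simp
  also have "\<dots> \<le> Q (t + 1) r r" by (rule CK[OF r r r])
  finally show ?case by simp
qed

end

lemma stoch_net:
  assumes M1: "M \<ge> 1" and ne: "networks N M \<noteq> {}"
  shows "stoch (networks N M) (rewire_prob N)"
proof
  show "finite (networks N M)" by (rule fin_X)
  show "networks N M \<noteq> {}" by (rule ne)
  show "0 \<le> rewire_prob N r s" if "r \<in> networks N M" for r s using P_nn that by blast
  show "(\<Sum>s\<in>networks N M. rewire_prob N r s) = 1" if "r \<in> networks N M" for r
    by (rule P_row[OF that M1])
  show "(\<Sum>r\<in>networks N M. rewire_prob N r s) = 1" if s: "s \<in> networks N M" for s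
  proof -
    have "(\<Sum>r\<in>networks N M. rewire_prob N r s) = (\<Sum>r\<in>networks N M. rewire_prob N s r)"
      by (intro sum.cong refl P_sym[OF _ s])
    then show ?thesis using P_row[OF s M1] by simp
  qed
qed

locale net =
  fixes N M :: nat
  assumes M1: "M \<ge> 1" and nne: "networks N M \<noteq> {}"

sublocale net \<subseteq> stoch "networks N M" "rewire_prob N"
  by (rule stoch_net[OF M1 nne])

context net begin

lemma P_self:
  assumes E: "E \<in> networks N M"
  shows "rewire_prob N E E > 0"
proof -
  have "E \<noteq> {}" using X_card[OF E] M1 by auto
  then obtain e where e: "e \<in> E" by auto
  have f: "e \<in> node_pairs N - (E - {e})" using X_sub[OF E] e by auto
  have "(E - {e}) \<union> {e} = E" using e by auto
  then show ?thesis using P_pos[OF E e f] by simp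
qed

lemma Q_pos_k:
  assumes E': "E' \<in> networks N M"
  shows "\<forall>E\<in>networks N M. card (E - E') = k \<longrightarrow> (\<forall>t\<ge>k. Q t E E' > 0)"
proof (induction k)
  case 0
  show ?case
  proof (intro ballI impI allI)
    fix E t assume E: "E \<in> networks N M" and c: "card (E - E') = 0"
    have "E - E' = {}" using c X_fin[OF E] by simp
    then have sub: "E \<subseteq> E'" by auto
    have "E = E'" by (rule card_subset_eq[OF X_fin[OF E'] sub]) (simp add: X_card[OF E] X_card[OF E'])
    then show "Q t E E' > 0" using Q_self[OF E P_self[OF E]] by simp
  qed
next
  case (Suc k)
  show ?case
  proof (intro ballI impI allI)
    fix E t assume E: "E \<in> networks N M" and c: "card (E - E') = Suc k" and t: "Suc k \<le> t"
    have fE: "finite E" and fE': "finite E'" using X_fin E E' by auto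
    have "card (E - E') \<noteq> 0" using c by simp
    then obtain e0 where "e0 \<in> E - E'" by (metis card.empty ex_in_conv)
    then obtain e where e: "e \<in> E" "e \<notin> E'" by auto
    have "card (E' - E) = card E' - card (E' \<inter> E)" using fE' by (simp add: card_Diff_subset_Int)
    also have "\<dots> = card E - card (E \<inter> E')" using X_card[OF E] X_card[OF E'] by (simp add: Int_commute)
    also have "\<dots> = card (E - E')" using fE by (simp add: card_Diff_subset_Int)
    finally have "card (E' - E) = Suc k" using c by simp
    then have "card (E' - E) \<noteq> 0" by simp
    then obtain f0 where "f0 \<in> E' - E" by (metis card.empty ex_in_conv)
    then obtain f where f: "f \<in> E'" "f \<notin> E" by auto
    have fK: "f \<in> node_pairs N - (E - {e})" using X_sub[OF E'] f by auto
    define E1 where "E1 = (E - {e}) \<union> {f}"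
    have E1: "E1 \<in> networks N M" unfolding E1_def by (rule step_in[OF E e(1) fK])
    have "E1 - E' = (E - E') - {e}" unfolding E1_def using f by auto
    then have "card (E1 - E') = k" using c e fE by (simp add: card_Diff_singleton)
    then have pos1: "Q (t - 1) E1 E' > 0" using Suc E1 t by auto
    have pos0: "Q 1 E E1 > 0" using Q1[OF E] P_pos[OF E e(1) fK] by (simp add: E1_def)
    have "0 < Q 1 E E1 * Q (t - 1) E1 E'" using pos0 pos1 by simp
    also have "\<dots> \<le> Q (1 + (t - 1)) E E'" by (rule CK[OF E E1 E'])
    also have "1 + (t - 1) = t" using t by simp
    finally show "Q t E E' > 0" .
  qed
qed

lemma Q_posM:
  assumes E: "E \<in> networks N M" and E': "E' \<in> networks N M"
  shows "Q M E E' > 0"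
proof -
  have "card (E - E') \<le> card E" using X_fin[OF E] by (intro card_mono) auto
  then have "card (E - E') \<le> M" using X_card[OF E] by simp
  then show ?thesis using Q_pos_k[OF E', rule_format, OF E refl] by simp
qed

end

lemma steps_eq: "rewire_steps N M t r s = itr (networks N M) (rewire_prob N) (pm r) t s"
  by (induction t arbitrary: s) (auto simp: pm_def)

lemma dist_eq: "rewire_dist N M G0 t s = itr (networks N M) (rewire_prob N) (pm G0) t s"
  by (induction t arbitrary: s) (auto simp: pm_def)

theorem theorem3p2:
  fixes N M :: nat and G0 :: "nat set set"
  assumes "N \<ge> 1" and "M \<ge> 1" and "G0 \<in> networks N M"
  shows "card (networks N M) = (N * (N - 1) div 2) choose M
     \<and> rewire_ergodic N M
     \<and> (\<forall>s\<in>networks N M.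
          (\<lambda>t. rewire_dist N M G0 t s) \<longlonglongrightarrow> 1 / real (card (networks N M)))"
proof -
  have nne: "networks N M \<noteq> {}" using assms(3) by auto
  interpret net N M using assms(2) nne by unfold_locales auto
  let ?X = "networks N M"
  have cK: "card (node_pairs N) = N choose 2"
    unfolding node_pairs_def by (simp add: n_subsets)
  have part1: "card ?X = (N * (N - 1) div 2) choose M"
    unfolding networks_def by (simp add: n_subsets fin_K cK choose_two)
  have irr: "rewire_irreducible N M"
    unfolding rewire_irreducible_def
  proof (intro ballI)
    fix r s assume r: "r \<in> ?X" and s: "s \<in> ?X"
    show "\<exists>t. 0 < rewire_steps N M t r s"
      using Q_posM[OF r s] by (auto simp: steps_eq)
  qed
  have ape: "rewire_aperiodic N M"
    unfolding rewire_aperiodic_def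
  proof (intro ballI)
    fix r assume r: "r \<in> ?X"
    have "rewire_steps N M 1 r r > 0" using Q1[OF r] P_self[OF r] by (simp add: steps_eq)
    then have "1 \<in> {t. t > 0 \<and> rewire_steps N M t r r > 0}" by simp
    then have "Gcd {t. t > 0 \<and> rewire_steps N M t r r > 0} dvd 1" by (rule Gcd_dvd)
    then show "Gcd {t. t > 0 \<and> rewire_steps N M t r r > 0} = 1" by simp
  qed
  define SQ where "SQ = (\<lambda>(r, s). Q M r s) ` (?X \<times> ?X)"
  define d0 where "d0 = Min SQ"
  have fSQ: "finite SQ" unfolding SQ_def using fin_X by simp
  have neSQ: "SQ \<noteq> {}" unfolding SQ_def using nne by simp
  have d0pos: "d0 > 0" unfolding d0_def using fSQ neSQ
    by (auto simp: SQ_def Q_posM)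
  have low: "\<forall>r\<in>?X. \<forall>s\<in>?X. d0 \<le> Q M r s"
    unfolding d0_def using fSQ by (auto simp: SQ_def intro!: Min_le)
  have Mpos: "M > 0" using assms(2) by simp
  have mu: "(\<Sum>s\<in>?X. pm G0 s) = 1" using assms(3) fin_X by (simp add: pm_def)
  have conv: "\<forall>s\<in>?X. (\<lambda>t. rewire_dist N M G0 t s) \<longlonglongrightarrow> 1 / real (card ?X)"
    using converge[OF Mpos d0pos low mu] by (simp add: dist_eq)
  show ?thesis using part1 irr ape conv by (simp add: rewire_ergodic_def)
qed

end
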